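(* Let $G$ be a zero-one reaction network with three species whose dimension ($=\operatorname{rank}$ of its stoichiometric matrix) is $2$, and suppose $G$ is degenerate. Let $G'$ be the network obtained from $G$ by removing all redundant species, and let $h$ be the steady-state system augmented by conservation laws of $G'$. Then every polynomial $f_i$ occurring in $h$ (i.e. $h_i=f_i$ for $i\notin I$) is a sum of exactly two monomials in the concentration variables $x$ (with coefficients in $\mathbb{Q}(\kappa)$, a constant term counting as a monomial); that is, the steady-state system of $G'$ is binomial.
   Context: A reaction network has species $X_1,\dots,X_s$ and reactions $\mu_{1j}X_1+\dots+\mu_{sj}X_s\xrightarrow{\kappa_j}\nu_{1j}X_1+\dots+\nu_{sj}X_s$ ($j=1,\dots,m$) with nonnegative integer coefficients, reactant vector different from product vector, and $\kappa_j>0$. It is zero-one if all $\mu_{ij},\nu_{ij}\in\{0,1\}$. Stoichiometric matrix $\mathcal{N}$: $(i,j)$-entry $\nu_{ij}-\mu_{ij}$; stoichiometric subspace $S$ = column space of $\mathcal{N}$. Mass-action dynamics: $\dot x=f(\kappa,x):=\mathcal{N}v(\kappa,x)$, $v_j=\kappa_j\prod_i x_i^{\mu_{ij}}$, so $f_i\in\mathbb{Q}(\kappa)[x]$. With $d=s-\operatorname{rank}\mathcal{N}$, a conservation-law matrix $W$ is a $d\times s$ row-reduced matrix whose rows form a basis of $S^\perp$; let $I=\{i_1<\dots<i_d\}$ be the column indices of the leading nonzero entries of the rows of $W$. The steady-state system augmented by conservation laws is $h=(h_1,\dots,h_s)$ with $h_i=f_i$ if $i\notin I$ and $h_{i_k}=(Wx-c)_k$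 for $i_k\in I$, $c\in\mathbb{R}^d$. A positive steady state $x^*\in\mathbb{R}^s_{>0}$ for $\kappa^*$ (with $f(\kappa^*,x^* )=0$) is degenerate if $\operatorname{Jac}_f(\kappa^*,x^* )|_S$ does not map onto $S$ (equivalently $\operatorname{Jac}_h$ at $x^*$ is singular). A network is degenerate if it admits positive steady states for some $\kappa$ and all of its positive steady states (for all $\kappa$) are degenerate. A species is redundant if in every reaction it either does not appear or appears on both the reactant and product side; removing it means deleting it from every reaction. *)

theory Defs
  imports "Jordan_Normal_Form.DL_Rank" "Jordan_Normal_Form.Gauss_Jordan_Elimination"
          "HOL-Library.Poly_Mapping"
begin

text \<open>Complexes: stoichiometric coefficient of species i is (c i); species are 0..<n.
  A reaction network is (n, R): n species and the list R of reactions (reactant, product).\<close>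

type_synonym cplx = "nat \<Rightarrow> nat"
type_synonym rnet = "nat \<times> (cplx \<times> cplx) list"

definition nsp :: "rnet \<Rightarrow> nat" where "nsp G = fst G"
definition rxns :: "rnet \<Rightarrow> (cplx \<times> cplx) list" where "rxns G = snd G"

definition wf_rnet :: "rnet \<Rightarrow> bool" where
  "wf_rnet G \<longleftrightarrow> (\<forall>r\<in>set (rxns G).
      (\<forall>i\<ge>nsp G. fst r i = 0 \<and> snd r i = 0) \<and> (\<exists>i<nsp G. fst r i \<noteq> snd r i))"

definition zero_one :: "rnet \<Rightarrow> bool" where
  "zero_one G \<longleftrightarrow> (\<forall>r\<in>set (rxns G). \<forall>i<nsp G. fst r i \<le> 1 \<and> snd r i \<le> 1)"

definition stoich_int :: "rnet \<Rightarrow> nat \<Rightarrow> nat \<Rightarrow> int" where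
  "stoich_int G i j = int (snd (rxns G ! j) i) - int (fst (rxns G ! j) i)"

definition stoich_mat :: "rnet \<Rightarrow> real mat" where
  "stoich_mat G = mat (nsp G) (length (rxns G)) (\<lambda>(i,j). real_of_int (stoich_int G i j))"

definition rank_rnet :: "rnet \<Rightarrow> nat" where
  "rank_rnet G = vec_space.rank (nsp G) (stoich_mat G)"

definition stoich_subspace :: "rnet \<Rightarrow> real vec set" where
  "stoich_subspace G = {stoich_mat G *\<^sub>v c | c. c \<in> carrier_vec (length (rxns G))}"

definition rate :: "rnet \<Rightarrow> (nat \<Rightarrow> real) \<Rightarrow> (nat \<Rightarrow> real) \<Rightarrow> nat \<Rightarrow> real" where
  "rate G \<kappa> x j = \<kappa> j * (\<Prod>l<nsp G. x l ^ fst (rxns G ! j) l)"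

definition ma_f :: "rnet \<Rightarrow> (nat \<Rightarrow> real) \<Rightarrow> (nat \<Rightarrow> real) \<Rightarrow> real vec" where
  "ma_f G \<kappa> x = stoich_mat G *\<^sub>v vec (length (rxns G)) (rate G \<kappa> x)"

definition jac_f :: "rnet \<Rightarrow> (nat \<Rightarrow> real) \<Rightarrow> (nat \<Rightarrow> real) \<Rightarrow> real mat" where
  "jac_f G \<kappa> x = mat (nsp G) (nsp G) (\<lambda>(i,k). \<Sum>j<length (rxns G).
      real_of_int (stoich_int G i j) * \<kappa> j *
      (real (fst (rxns G ! j) k) * x k ^ (fst (rxns G ! j) k - 1) *
       (\<Prod>l\<in>{..<nsp G} - {k}. x l ^ fst (rxns G ! j) l)))"

definition pos_steady_state :: "rnet \<Rightarrow> (nat \<Rightarrow> real) \<Rightarrow> (nat \<Rightarrow> real) \<Rightarrow> bool" where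
  "pos_steady_state G \<kappa> x \<longleftrightarrow> (\<forall>j<length (rxns G). \<kappa> j > 0) \<and> (\<forall>i<nsp G. x i > 0)
      \<and> ma_f G \<kappa> x = 0\<^sub>v (nsp G)"

definition degenerate_ss :: "rnet \<Rightarrow> (nat \<Rightarrow> real) \<Rightarrow> (nat \<Rightarrow> real) \<Rightarrow> bool" where
  "degenerate_ss G \<kappa> x \<longleftrightarrow> (\<lambda>u. jac_f G \<kappa> x *\<^sub>v u) ` stoich_subspace G \<noteq> stoich_subspace G"

definition degenerate_rnet :: "rnet \<Rightarrow> bool" where
  "degenerate_rnet G \<longleftrightarrow> (\<exists>\<kappa> x. pos_steady_state G \<kappa> x)
      \<and> (\<forall>\<kappa> x. pos_steady_state G \<kappa> x \<longrightarrow> degenerate_ss G \<kappa> x)"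

definition redundant :: "rnet \<Rightarrow> nat \<Rightarrow> bool" where
  "redundant G i \<longleftrightarrow> i < nsp G \<and> (\<forall>r\<in>set (rxns G).
      (fst r i = 0 \<and> snd r i = 0) \<or> (fst r i > 0 \<and> snd r i > 0))"

definition remove_redundant :: "rnet \<Rightarrow> rnet" where
  "remove_redundant G =
    (let ks = filter (\<lambda>i. \<not> redundant G i) [0..<nsp G];
         re = (\<lambda>a::cplx. \<lambda>k. if k < length ks then a (ks ! k) else 0)
     in (length ks, map (\<lambda>(a,b). (re a, re b)) (rxns G)))"

definition cons_law_matrix :: "rnet \<Rightarrow> real mat \<Rightarrow> bool" where
  "cons_law_matrix G W \<longleftrightarrow>
    (let n = nsp G; d = nsp G - rank_rnet G;
         Sperp = {w \<in> carrier_vec n. \<forall>v\<in>stoich_subspace G. w \<bullet> v = 0}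
     in W \<in> carrier_mat d n \<and> row_echelon_form W
        \<and> (\<forall>k<d. row W k \<in> Sperp)
        \<and> (\<forall>c\<in>carrier_vec d. transpose_mat W *\<^sub>v c = 0\<^sub>v n \<longrightarrow> c = 0\<^sub>v d)
        \<and> (\<forall>w\<in>Sperp. \<exists>c\<in>carrier_vec d. w = transpose_mat W *\<^sub>v c))"

definition lead_indices :: "real mat \<Rightarrow> nat set" where
  "lead_indices W = {LEAST j. W $$ (k, j) \<noteq> 0 | k. k < dim_row W}"

text \<open>f_i as a formal polynomial in x with coefficients in Q[kappa] (a subring of Q(kappa)):
  monomials in x are exponent vectors nat =>0 nat; coefficients are polynomials in kappa,
  i.e. (nat =>0 nat) =>0 rat. f_i = sum_j N_ij kappa_j x^(mu_j).\<close>
type_synonym qkappa = "(nat \<Rightarrow>\<^sub>0 nat) \<Rightarrow>\<^sub>0 rat"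

definition expo :: "rnet \<Rightarrow> cplx \<Rightarrow> nat \<Rightarrow>\<^sub>0 nat" where
  "expo G a = (\<Sum>l<nsp G. Poly_Mapping.single l (a l))"

definition f_poly :: "rnet \<Rightarrow> nat \<Rightarrow> (nat \<Rightarrow>\<^sub>0 nat) \<Rightarrow>\<^sub>0 qkappa" where
  "f_poly G i = (\<Sum>j<length (rxns G).
      Poly_Mapping.single (expo G (fst (rxns G ! j)))
        (Poly_Mapping.single (Poly_Mapping.single j 1) (of_int (stoich_int G i j))))"

end

theory Submission
  imports Defs
begin

lemma cramer3:
  fixes A B C D E F G H I s0 s1 s2 :: real
  assumes "A*(E*I-F*H) - B*(D*I-F*G) + C*(D*H-E*G) \<noteq> 0"
  shows "\<exists>u0 u1 u2. A*u0+B*u1+C*u2 = s0 \<and> D*u0+E*u1+F*u2 = s1 \<and> G*u0+H*u1+I*u2 = s2"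
proof -
  define dt where "dt = A*(E*I-F*H) - B*(D*I-F*G) + C*(D*H-E*G)"
  have dnz: "dt \<noteq> 0" using assms unfolding dt_def .
  define n0 where "n0 = s0*(E*I-F*H) - B*(s1*I-F*s2) + C*(s1*H-E*s2)"
  define n1 where "n1 = A*(s1*I-F*s2) - s0*(D*I-F*G) + C*(D*s2-s1*G)"
  define n2 where "n2 = A*(E*s2-s1*H) - B*(D*s2-s1*G) + s0*(D*H-E*G)"
  have e0: "A*n0+B*n1+C*n2 = s0*dt" unfolding n0_def n1_def n2_def dt_def by (simp add: algebra_simps)
  have e1: "D*n0+E*n1+F*n2 = s1*dt" unfolding n0_def n1_def n2_def dt_def by (simp add: algebra_simps)
  have e2: "G*n0+H*n1+I*n2 = s2*dt" unfolding n0_def n1_def n2_def dt_def by (simp add: algebra_simps)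
  show ?thesis
  proof (intro exI conjI)
    show "A*(n0/dt)+B*(n1/dt)+C*(n2/dt) = s0" using e0 dnz by (simp add: field_simps)
    show "D*(n0/dt)+E*(n1/dt)+F*(n2/dt) = s1" using e1 dnz by (simp add: field_simps)
    show "G*(n0/dt)+H*(n1/dt)+I*(n2/dt) = s2" using e2 dnz by (simp add: field_simps)
  qed
qed

lemma detK_aux:
  fixes a b c d e f g h i w0 w1 w2 :: real
  assumes "w0*a + w1*d + w2*g = 0" "w0*b + w1*e + w2*h = 0" "w0*c + w1*f + w2*i = 0"
  shows "w0*((a+w0*w0)*((e+w1*w1)*(i+w2*w2) - (f+w1*w2)*(h+w2*w1))
       - (b+w0*w1)*((d+w1*w0)*(i+w2*w2) - (f+w1*w2)*(g+w2*w0))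
       + (c+w0*w2)*((d+w1*w0)*(h+w2*w1) - (e+w1*w1)*(g+w2*w0))
     - (w0*w0+w1*w1+w2*w2) * ((a*e - b*d) + (a*i - c*g) + (e*i - f*h))) = 0"
    "w1*((a+w0*w0)*((e+w1*w1)*(i+w2*w2) - (f+w1*w2)*(h+w2*w1))
       - (b+w0*w1)*((d+w1*w0)*(i+w2*w2) - (f+w1*w2)*(g+w2*w0))
       + (c+w0*w2)*((d+w1*w0)*(h+w2*w1) - (e+w1*w1)*(g+w2*w0))
     - (w0*w0+w1*w1+w2*w2) * ((a*e - b*d) + (a*i - c*g) + (e*i - f*h))) = 0"
    "w2*((a+w0*w0)*((e+w1*w1)*(i+w2*w2) - (f+w1*w2)*(h+w2*w1))
       - (b+w0*w1)*((d+w1*w0)*(i+w2*w2) - (f+w1*w2)*(g+w2*w0))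
       + (c+w0*w2)*((d+w1*w0)*(h+w2*w1) - (e+w1*w1)*(g+w2*w0))
     - (w0*w0+w1*w1+w2*w2) * ((a*e - b*d) + (a*i - c*g) + (e*i - f*h))) = 0"
proof -
  have h0: "w0*((a+w0*w0)*((e+w1*w1)*(i+w2*w2) - (f+w1*w2)*(h+w2*w1))
       - (b+w0*w1)*((d+w1*w0)*(i+w2*w2) - (f+w1*w2)*(g+w2*w0))
       + (c+w0*w2)*((d+w1*w0)*(h+w2*w1) - (e+w1*w1)*(g+w2*w0))
     - (w0*w0+w1*w1+w2*w2) * ((a*e - b*d) + (a*i - c*g) + (e*i - f*h))) = (e*i - f*h - f*w1*w2 - h*w1*w2 - e*w0*w0 - i*w0*w0 - e*w1*w1 - i*w2*w2)*(w0*a + w1*d + w2*g) + (- d*i - i*w0*w1 + f*g + f*w0*w2 + g*w1*w2 + d*w0*w0 + d*w1*w1)*(w0*b + w1*e + w2*h) + (d*h + d*w1*w2 + h*w0*w1 - e*g - e*w0*w2 + g*w0*w0 + g*w2*w2)*(w0*c + w1*f + w2*i)"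
    by (simp add: algebra_simps)
  have h1: "w1*((a+w0*w0)*((e+w1*w1)*(i+w2*w2) - (f+w1*w2)*(h+w2*w1))
       - (b+w0*w1)*((d+w1*w0)*(i+w2*w2) - (f+w1*w2)*(g+w2*w0))
       + (c+w0*w2)*((d+w1*w0)*(h+w2*w1) - (e+w1*w1)*(g+w2*w0))
     - (w0*w0+w1*w1+w2*w2) * ((a*e - b*d) + (a*i - c*g) + (e*i - f*h))) = (c*h + c*w1*w2 + h*w0*w2 - b*i - i*w0*w1 + b*w0*w0 + b*w1*w1)*(w0*a + w1*d + w2*g) + (a*i - c*g - c*w0*w2 - g*w0*w2 - a*w0*w0 - a*w1*w1 - i*w1*w1 - i*w2*w2)*(w0*b + w1*e + w2*h) + (- a*h - a*w1*w2 + b*g + b*w0*w2 + g*w0*w1 + h*w1*w1 + h*w2*w2)*(w0*c + w1*f + w2*i)"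
    by (simp add: algebra_simps)
  have h2: "w2*((a+w0*w0)*((e+w1*w1)*(i+w2*w2) - (f+w1*w2)*(h+w2*w1))
       - (b+w0*w1)*((d+w1*w0)*(i+w2*w2) - (f+w1*w2)*(g+w2*w0))
       + (c+w0*w2)*((d+w1*w0)*(h+w2*w1) - (e+w1*w1)*(g+w2*w0))
     - (w0*w0+w1*w1+w2*w2) * ((a*e - b*d) + (a*i - c*g) + (e*i - f*h))) = (- c*e - e*w0*w2 + b*f + b*w1*w2 + f*w0*w1 + c*w0*w0 + c*w2*w2)*(w0*a + w1*d + w2*g) + (- a*f - a*w1*w2 + c*d + c*w0*w1 + d*w0*w2 + f*w1*w1 + f*w2*w2)*(w0*b + w1*e + w2*h) + (a*e - b*d - b*w0*w1 - d*w0*w1 - a*w0*w0 - e*w1*w1 - a*w2*w2 - e*w2*w2)*(w0*c + w1*f + w2*i)"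
    by (simp add: algebra_simps)
  show "w0*((a+w0*w0)*((e+w1*w1)*(i+w2*w2) - (f+w1*w2)*(h+w2*w1))
       - (b+w0*w1)*((d+w1*w0)*(i+w2*w2) - (f+w1*w2)*(g+w2*w0))
       + (c+w0*w2)*((d+w1*w0)*(h+w2*w1) - (e+w1*w1)*(g+w2*w0))
     - (w0*w0+w1*w1+w2*w2) * ((a*e - b*d) + (a*i - c*g) + (e*i - f*h))) = 0"
    unfolding h0 assms by simp
  show "w1*((a+w0*w0)*((e+w1*w1)*(i+w2*w2) - (f+w1*w2)*(h+w2*w1))
       - (b+w0*w1)*((d+w1*w0)*(i+w2*w2) - (f+w1*w2)*(g+w2*w0))
       + (c+w0*w2)*((d+w1*w0)*(h+w2*w1) - (e+w1*w1)*(g+w2*w0))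
     - (w0*w0+w1*w1+w2*w2) * ((a*e - b*d) + (a*i - c*g) + (e*i - f*h))) = 0"
    unfolding h1 assms by simp
  show "w2*((a+w0*w0)*((e+w1*w1)*(i+w2*w2) - (f+w1*w2)*(h+w2*w1))
       - (b+w0*w1)*((d+w1*w0)*(i+w2*w2) - (f+w1*w2)*(g+w2*w0))
       + (c+w0*w2)*((d+w1*w0)*(h+w2*w1) - (e+w1*w1)*(g+w2*w0))
     - (w0*w0+w1*w1+w2*w2) * ((a*e - b*d) + (a*i - c*g) + (e*i - f*h))) = 0"
    unfolding h2 assms by simp
qed

lemma lemL_scalar:
  fixes a b c d e f g h i w0 w1 w2 s0 s1 s2 :: real
  assumes c: "w0*a + w1*d + w2*g = 0" "w0*b + w1*e + w2*h = 0" "w0*c + w1*f + w2*i = 0"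
    and wnz: "w0 \<noteq> 0 \<or> w1 \<noteq> 0 \<or> w2 \<noteq> 0"
    and e2: "(a*e - b*d) + (a*i - c*g) + (e*i - f*h) \<noteq> 0"
    and s: "w0*s0 + w1*s1 + w2*s2 = 0"
  shows "\<exists>u0 u1 u2. w0*u0+w1*u1+w2*u2 = 0 \<and> a*u0+b*u1+c*u2 = s0 \<and> d*u0+e*u1+f*u2 = s1
          \<and> g*u0+h*u1+i*u2 = s2"
proof -
  have nw: "w0*w0+w1*w1+w2*w2 > 0"
  proof -
    have "w0*w0 \<ge> 0" "w1*w1 \<ge> 0" "w2*w2 \<ge> 0" by auto
    moreover have "w0*w0>0 \<or> w1*w1>0 \<or> w2*w2>0" using wnz by (auto simp: zero_less_mult_iff)
    ultimately show ?thesis by linarith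
  qed
  let ?dt = "(a+w0*w0)*((e+w1*w1)*(i+w2*w2) - (f+w1*w2)*(h+w2*w1))
       - (b+w0*w1)*((d+w1*w0)*(i+w2*w2) - (f+w1*w2)*(g+w2*w0))
       + (c+w0*w2)*((d+w1*w0)*(h+w2*w1) - (e+w1*w1)*(g+w2*w0))"
  have "?dt = (w0*w0+w1*w1+w2*w2) * ((a*e - b*d) + (a*i - c*g) + (e*i - f*h))"
    using detK_aux[OF c] wnz by auto
  hence "?dt \<noteq> 0" using nw e2 by simp
  then obtain u0 u1 u2 where u: "(a+w0*w0)*u0+(b+w0*w1)*u1+(c+w0*w2)*u2 = s0"
     "(d+w1*w0)*u0+(e+w1*w1)*u1+(f+w1*w2)*u2 = s1" "(g+w2*w0)*u0+(h+w2*w1)*u1+(i+w2*w2)*u2 = s2"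
    using cramer3[of "a+w0*w0" "e+w1*w1" "i+w2*w2" "f+w1*w2" "h+w2*w1" "b+w0*w1" "d+w1*w0" "g+w2*w0" "c+w0*w2" s0 s1 s2]
    by auto
  have "w0*s0+w1*s1+w2*s2 = (w0*a + w1*d + w2*g)*u0 + (w0*b + w1*e + w2*h)*u1 + (w0*c + w1*f + w2*i)*u2
        + (w0*w0+w1*w1+w2*w2)*(w0*u0+w1*u1+w2*u2)"
    by (simp add: u[symmetric] algebra_simps)
  hence "(w0*w0+w1*w1+w2*w2)*(w0*u0+w1*u1+w2*u2) = 0" using c s by simp
  hence wu: "w0*u0+w1*u1+w2*u2 = 0" using nw by simp
  show ?thesis
  proof (intro exI conjI)
    show "w0*u0+w1*u1+w2*u2 = 0" by fact
    have "(a+w0*w0)*u0+(b+w0*w1)*u1+(c+w0*w2)*u2 = (a*u0+b*u1+c*u2) + w0*(w0*u0+w1*u1+w2*u2)"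
      "(d+w1*w0)*u0+(e+w1*w1)*u1+(f+w1*w2)*u2 = (d*u0+e*u1+f*u2) + w1*(w0*u0+w1*u1+w2*u2)"
      "(g+w2*w0)*u0+(h+w2*w1)*u1+(i+w2*w2)*u2 = (g*u0+h*u1+i*u2) + w2*(w0*u0+w1*u1+w2*u2)"
      by (simp_all add: algebra_simps)
    then show "a*u0+b*u1+c*u2 = s0" "d*u0+e*u1+f*u2 = s1" "g*u0+h*u1+i*u2 = s2"
      using u wu by simp_all
  qed
qed



lemma ma_f_idx:
  assumes "i < nsp G"
  shows "ma_f G \<kappa> x $ i = (\<Sum>j<length (rxns G). real_of_int (stoich_int G i j) * rate G \<kappa> x j)"
  using assms by (simp add: ma_f_def stoich_mat_def scalar_prod_def atLeast0LessThan)

lemma jac_idx: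
  assumes "i < nsp G" "k < nsp G"
  shows "jac_f G \<kappa> x $$ (i,k) = (\<Sum>j<length (rxns G).
      real_of_int (stoich_int G i j) * \<kappa> j *
      (real (fst (rxns G ! j) k) * x k ^ (fst (rxns G ! j) k - 1) *
       (\<Prod>l\<in>{..<nsp G} - {k}. x l ^ fst (rxns G ! j) l)))"
  using assms by (simp add: jac_f_def)

lemma expo_lookup: "Poly_Mapping.lookup (expo H a) l = (if l < nsp H then a l else 0)"
  by (simp add: expo_def Poly_Mapping.lookup_sum Poly_Mapping.lookup_single when_def)

lemma single_one_inj: "Poly_Mapping.single j (1::nat) = Poly_Mapping.single j' 1 \<longleftrightarrow> j = j'"
proof
  assume eq: "Poly_Mapping.single j (1::nat) = Poly_Mapping.single j' 1"
  show "j = j'"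
  proof (rule ccontr)
    assume ne: "j \<noteq> j'"
    have "Poly_Mapping.lookup (Poly_Mapping.single j (1::nat)) j = 1" by (simp only: lookup_single_eq)
    moreover have "Poly_Mapping.lookup (Poly_Mapping.single j' (1::nat)) j = 0" using ne by (simp add: lookup_single_not_eq)
    ultimately show False using eq by (metis one_neq_zero)
  qed
qed simp

lemma keys_f_poly:
  "Poly_Mapping.keys (f_poly H i) = (\<lambda>j. expo H (fst (rxns H ! j))) ` {j. j < length (rxns H) \<and> stoich_int H i j \<noteq> 0}"
proof -
  let ?E = "\<lambda>j. expo H (fst (rxns H ! j))"
  let ?M = "\<lambda>j. Poly_Mapping.single (Poly_Mapping.single j (1::nat)) (of_int (stoich_int H i j) :: rat)"
  have L: "Poly_Mapping.lookup (f_poly H i) e = (\<Sum>j<length (rxns H). if ?E j = e then ?M j else 0)" for e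
    unfolding f_poly_def Poly_Mapping.lookup_sum
    by (rule sum.cong[OF refl]) (simp only: Poly_Mapping.lookup_single when_def)
  show ?thesis
  proof (rule Set.set_eqI, rule iffI)
    fix e assume "e \<in> Poly_Mapping.keys (f_poly H i)"
    then have "Poly_Mapping.lookup (f_poly H i) e \<noteq> 0" by (simp add: in_keys_iff)
    then obtain j where j0: "j \<in> {..<length (rxns H)}" "(if ?E j = e then ?M j else 0) \<noteq> 0"
      unfolding L by (rule sum.not_neutral_contains_not_neutral)
    then have j: "j < length (rxns H)" "(if ?E j = e then ?M j else 0) \<noteq> 0" by auto
    then have "?E j = e" "?M j \<noteq> 0" by (auto split: if_splits)
    then have "stoich_int H i j \<noteq> 0" by auto
    then show "e \<in> ?E ` {j. j < length (rxns H) \<and> stoich_int H i j \<noteq> 0}" using j \<open>?E j = e\<close> by blast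
  next
    fix e assume "e \<in> ?E ` {j. j < length (rxns H) \<and> stoich_int H i j \<noteq> 0}"
    then obtain j0 where j0: "j0 < length (rxns H)" "stoich_int H i j0 \<noteq> 0" "e = ?E j0" by blast
    have "Poly_Mapping.lookup (Poly_Mapping.lookup (f_poly H i) e) (Poly_Mapping.single j0 1)
        = (\<Sum>j<length (rxns H). Poly_Mapping.lookup (if ?E j = e then ?M j else 0) (Poly_Mapping.single j0 1))"
      unfolding L Poly_Mapping.lookup_sum by simp
    also have "\<dots> = (\<Sum>j<length (rxns H). if j = j0 then of_int (stoich_int H i j0) else 0)"
    proof (rule sum.cong[OF refl])
      fix j assume "j \<in> {..<length (rxns H)}"
      show "Poly_Mapping.lookup (if ?E j = e then ?M j else 0) (Poly_Mapping.single j0 1) = (if j = j0 then of_int (stoich_int H i j0) else 0)"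
      proof (cases "j = j0")
        case True then show ?thesis using j0 by simp
      next
        case False
        have "Poly_Mapping.single j (1::nat) \<noteq> Poly_Mapping.single j0 1"
        proof
          assume "Poly_Mapping.single j (1::nat) = Poly_Mapping.single j0 1"
          then have "j = j0" by (rule single_one_inj[THEN iffD1])
          then show False using False by simp
        qed
        then show ?thesis using False by (simp add: lookup_single_not_eq)
      qed
    qed
    also have "\<dots> = of_int (stoich_int H i j0)" using j0 by simp
    finally have "Poly_Mapping.lookup (f_poly H i) e \<noteq> 0" using j0 by auto
    then show "e \<in> Poly_Mapping.keys (f_poly H i)" by (simp add: in_keys_iff)
  qed
qed

locale net3 =
  fixes G :: rnet
  assumes wf: "wf_rnet G" and zo: "zero_one G" and n3: "nsp G = 3"
begin

abbreviation "m \<equiv> length (rxns G)"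
abbreviation "mu j k \<equiv> fst (rxns G ! j) k"
abbreviation "nu j k \<equiv> snd (rxns G ! j) k"
abbreviation "N i j \<equiv> stoich_int G i j"

lemma mu_nu_le1: assumes "j < m" "k < 3" shows "mu j k \<le> 1 \<and> nu j k \<le> 1"
proof -
  have "rxns G ! j \<in> set (rxns G)" using assms by simp
  moreover have "\<forall>r\<in>set (rxns G). \<forall>i<nsp G. fst r i \<le> 1 \<and> snd r i \<le> 1"
    using zo unfolding zero_one_def .
  ultimately have "\<forall>i<nsp G. mu j i \<le> 1 \<and> nu j i \<le> 1" by blast
  then show ?thesis using assms n3 by simp
qed
lemma mu_le1: "j < m \<Longrightarrow> k < 3 \<Longrightarrow> mu j k \<le> 1" using mu_nu_le1 by blast
lemma nu_le1: "j < m \<Longrightarrow> k < 3 \<Longrightarrow> nu j k \<le> 1" using mu_nu_le1 by blast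

lemma N_def': "N i j = int (nu j i) - int (mu j i)"
  by (simp add: stoich_int_def)

lemma N_cases: "j < m \<Longrightarrow> i < 3 \<Longrightarrow>
   (N i j = 1 \<and> mu j i = 0 \<and> nu j i = 1) \<or> (N i j = -1 \<and> mu j i = 1 \<and> nu j i = 0)
   \<or> (N i j = 0 \<and> mu j i = nu j i)"
  using mu_le1[of j i] nu_le1[of j i] by (auto simp: N_def' le_Suc_eq)

lemma red_N0: assumes "redundant G r" "j < m" shows "N r j = 0"
proof -
  have "rxns G ! j \<in> set (rxns G)" using assms by simp
  moreover have "\<forall>r'\<in>set (rxns G). (fst r' r = 0 \<and> snd r' r = 0) \<or> (fst r' r > 0 \<and> snd r' r > 0)"
    and r3: "r < 3"
    using assms(1) n3 unfolding redundant_def by auto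
  ultimately have "(mu j r = 0 \<and> nu j r = 0) \<or> (mu j r > 0 \<and> nu j r > 0)" by blast
  moreover have "N r j = int (nu j r) - int (mu j r)" by (rule N_def')
  moreover have "mu j r \<le> 1" "nu j r \<le> 1" using mu_le1[OF assms(2) r3] nu_le1[OF assms(2) r3] .
  ultimately show ?thesis by linarith
qed

lemma nonred_N: "i < 3 \<Longrightarrow> \<not> redundant G i \<Longrightarrow> \<exists>j<m. N i j \<noteq> 0"
proof -
  assume a: "i < 3" "\<not> redundant G i"
  then obtain r where r: "r \<in> set (rxns G)" "\<not> ((fst r i = 0 \<and> snd r i = 0) \<or> (fst r i > 0 \<and> snd r i > 0))"
    unfolding redundant_def using n3 by auto
  then obtain j where j: "j < m" "rxns G ! j = r" by (metis in_set_conv_nth)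
  show ?thesis using N_cases[of j i] a j r by (intro exI[of _ j]) auto
qed

definition A :: "(nat \<Rightarrow> real) \<Rightarrow> nat \<Rightarrow> nat \<Rightarrow> real" where
  "A lam i k = (\<Sum>j<m. lam j * real_of_int (N i j) * real (mu j k))"

lemma stoich_mv: assumes "i < 3" "c \<in> carrier_vec m"
  shows "(stoich_mat G *\<^sub>v c) $ i = (\<Sum>j<m. real_of_int (N i j) * c $ j)"
  using assms n3 by (simp add: stoich_mat_def scalar_prod_def atLeast0LessThan)

lemma stoich_carrier: "stoich_mat G \<in> carrier_mat 3 m"
  using n3 by (simp add: stoich_mat_def)

lemma jac_carrier: "jac_f G \<kappa> x \<in> carrier_mat 3 3"
  using n3 by (simp add: jac_f_def)

lemma jac_mv: assumes "i < 3" "u \<in> carrier_vec 3"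
  shows "(jac_f G \<kappa> x *\<^sub>v u) $ i = (\<Sum>k<3. jac_f G \<kappa> x $$ (i,k) * u $ k)"
  using assms jac_carrier[of \<kappa> x] by (simp add: scalar_prod_def atLeast0LessThan)

lemma sum3: "(\<Sum>k<(3::nat). f k) = f 0 + f 1 + (f 2 :: real)"
  by (simp add: eval_nat_numeral)

lemma constr:
  fixes lam z x \<kappa> :: "nat \<Rightarrow> real"
  assumes lp: "\<forall>j<m. lam j > 0" and zp: "\<forall>k<3. z k > 0"
    and ker: "\<forall>i<(3::nat). (\<Sum>j<m. real_of_int (N i j) * lam j) = 0"
    and x_def: "x = (\<lambda>k. 1 / z k)" and \<kappa>_def: "\<kappa> = (\<lambda>j. lam j / (\<Prod>l<3. x l ^ mu j l))"
  shows "pos_steady_state G \<kappa> x" and "\<forall>i<3. \<forall>k<3. jac_f G \<kappa> x $$ (i,k) = A lam i k * z k"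
proof -
  have xp: "\<forall>k<3. x k > 0" using zp unfolding x_def by simp
  have pp: "(\<Prod>l<3. x l ^ mu j l) > 0" for j using xp by (intro prod_pos) auto
  have dc: "\<And>a b::real. b \<noteq> 0 \<Longrightarrow> a / b * b = a" by simp
  have rt: "rate G \<kappa> x j = lam j" if "j < m" for j
  proof -
    have "rate G \<kappa> x j = \<kappa> j * (\<Prod>l<3. x l ^ mu j l)" by (simp add: rate_def n3)
    also have "\<dots> = lam j / (\<Prod>l<3. x l ^ mu j l) * (\<Prod>l<3. x l ^ mu j l)"
      unfolding \<kappa>_def by simp
    also have "\<dots> = lam j" using pp[of j] by (intro dc) linarith
    finally show ?thesis .
  qed
  show "pos_steady_state G \<kappa> x"
    unfolding pos_steady_state_def
  proof (intro conjI allI impI)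
    show "\<kappa> j > 0" if "j < m" for j using lp that pp[of j] unfolding \<kappa>_def by simp
    show "x i > 0" if "i < nsp G" for i using xp that n3 by simp
    show "ma_f G \<kappa> x = 0\<^sub>v (nsp G)"
    proof (rule eq_vecI)
      show "dim_vec (ma_f G \<kappa> x) = dim_vec (0\<^sub>v (nsp G))" by (simp add: ma_f_def stoich_mat_def)
      fix i assume "i < dim_vec (0\<^sub>v (nsp G))"
      then have i: "i < 3" using n3 by simp
      have "ma_f G \<kappa> x $ i = (\<Sum>j<m. real_of_int (N i j) * lam j)"
        using ma_f_idx[of i G \<kappa> x] i n3 rt by simp
      then show "ma_f G \<kappa> x $ i = 0\<^sub>v (nsp G) $ i" using ker i n3 by simp
    qed
  qed
  show "\<forall>i<3. \<forall>k<3. jac_f G \<kappa> x $$ (i,k) = A lam i k * z k"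
  proof (intro allI impI)
    fix i k :: nat assume ik: "i < 3" "k < 3"
    have tm: "real_of_int (N i j) * \<kappa> j *
      (real (mu j k) * x k ^ (mu j k - 1) * (\<Prod>l\<in>{..<3} - {k}. x l ^ mu j l))
      = lam j * real_of_int (N i j) * real (mu j k) * z k" if j: "j < m" for j
    proof (cases "mu j k = 0")
      case True then show ?thesis by simp
    next
      case False
      then have m1: "mu j k = 1" using mu_le1[OF j ik(2)] by simp
      define Q where "Q = (\<Prod>l\<in>{..<3} - {k}. x l ^ mu j l)"
      have "(\<Prod>l<3. x l ^ mu j l) = x k ^ mu j k * (\<Prod>l\<in>{..<3} - {k}. x l ^ mu j l)"
        using ik by (intro prod.remove) auto
      then have P: "(\<Prod>l<3. x l ^ mu j l) = x k * Q"
        using m1 unfolding Q_def by simp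
      have Qp: "Q > 0" unfolding Q_def using xp by (intro prod_pos) auto
      have zk: "z k > 0" using zp ik by simp
      have xk: "x k = 1 / z k" using x_def by simp
      have "\<kappa> j = lam j / (x k * Q)" using P unfolding \<kappa>_def by simp
      also have "\<dots> = lam j * z k / Q" unfolding xk using zk Qp by (simp add: field_simps)
      finally have kj: "\<kappa> j = lam j * z k / Q" .
      show ?thesis unfolding Q_def[symmetric] using m1 kj Qp by (simp add: field_simps)
    qed
    have "jac_f G \<kappa> x $$ (i,k) = (\<Sum>j<m. real_of_int (N i j) * \<kappa> j *
      (real (mu j k) * x k ^ (mu j k - 1) * (\<Prod>l\<in>{..<3} - {k}. x l ^ mu j l)))"
      using jac_idx[of i G k \<kappa> x] ik n3 by simp
    also have "\<dots> = (\<Sum>j<m. lam j * real_of_int (N i j) * real (mu j k) * z k)"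
      by (rule sum.cong[OF refl], rule tm) simp
    also have "\<dots> = A lam i k * z k" unfolding A_def by (simp add: sum_distrib_right)
    finally show "jac_f G \<kappa> x $$ (i,k) = A lam i k * z k" .
  qed
qed

lemma nondeg:
  assumes wnz: "w 0 \<noteq> 0 \<or> w 1 \<noteq> 0 \<or> w (2::nat) \<noteq> (0::real)"
    and wp: "\<forall>j<m. w 0 * real_of_int (N 0 j) + w 1 * real_of_int (N 1 j) + w 2 * real_of_int (N 2 j) = 0"
    and e2: "(jac_f G \<kappa> x $$ (0,0) * jac_f G \<kappa> x $$ (1,1) - jac_f G \<kappa> x $$ (0,1) * jac_f G \<kappa> x $$ (1,0))
           + (jac_f G \<kappa> x $$ (0,0) * jac_f G \<kappa> x $$ (2,2) - jac_f G \<kappa> x $$ (0,2) * jac_f G \<kappa> x $$ (2,0))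
           + (jac_f G \<kappa> x $$ (1,1) * jac_f G \<kappa> x $$ (2,2) - jac_f G \<kappa> x $$ (1,2) * jac_f G \<kappa> x $$ (2,1)) \<noteq> 0"
  shows "\<not> degenerate_ss G \<kappa> x"
proof -
  define T where "T j k = \<kappa> j * (real (mu j k) * x k ^ (mu j k - 1) * (\<Prod>l\<in>{..<3} - {k}. x l ^ mu j l))" for j k
  define J where "J i k = jac_f G \<kappa> x $$ (i,k)" for i k
  have Jeq: "J i k = (\<Sum>j<m. real_of_int (N i j) * T j k)" if "i < 3" "k < 3" for i k
    using jac_idx[of i G k \<kappa> x] that n3 unfolding J_def T_def by (simp add: mult.assoc)
  have jv: "(jac_f G \<kappa> x *\<^sub>v u) $ i = J i 0 * u$0 + J i 1 * u$1 + J i 2 * u$2"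
    if "i < 3" "u \<in> carrier_vec 3" for i u
    using jac_mv[OF that, of \<kappa> x] sum3 unfolding J_def by simp
  have jcar: "jac_f G \<kappa> x *\<^sub>v u \<in> carrier_vec 3" if "u \<in> carrier_vec 3" for u
    by (rule mult_mat_vec_carrier[OF jac_carrier that])
  have Scar: "s \<in> carrier_vec 3" if sS: "s \<in> stoich_subspace G" for s
  proof -
    obtain c where "c \<in> carrier_vec m" "s = stoich_mat G *\<^sub>v c"
      using sS unfolding stoich_subspace_def by blast
    then show ?thesis using mult_mat_vec_carrier[OF stoich_carrier] by simp
  qed
  have inS: "jac_f G \<kappa> x *\<^sub>v u \<in> stoich_subspace G" if u: "u \<in> carrier_vec 3" for u
  proof -
    define c where "c = vec m (\<lambda>j. \<Sum>k<3. T j k * u $ k)"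
    have cc: "c \<in> carrier_vec m" unfolding c_def by simp
    have "stoich_mat G *\<^sub>v c = jac_f G \<kappa> x *\<^sub>v u"
    proof (rule eq_vecI)
      show "dim_vec (stoich_mat G *\<^sub>v c) = dim_vec (jac_f G \<kappa> x *\<^sub>v u)"
        using jac_carrier[of \<kappa> x] n3 by (simp add: stoich_mat_def)
      fix i assume "i < dim_vec (jac_f G \<kappa> x *\<^sub>v u)"
      then have i: "i < 3" using jac_carrier[of \<kappa> x] by simp
      have "(stoich_mat G *\<^sub>v c) $ i = (\<Sum>j<m. real_of_int (N i j) * (\<Sum>k<3. T j k * u $ k))"
        using stoich_mv[OF i cc] unfolding c_def by simp
      also have "\<dots> = (\<Sum>k<3. (\<Sum>j<m. real_of_int (N i j) * T j k) * u $ k)"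
        by (simp add: sum_distrib_left sum_distrib_right mult.assoc sum.swap[of _ "{..<3}"])
      also have "\<dots> = (\<Sum>k<3. J i k * u $ k)" using Jeq i by simp
      also have "\<dots> = (jac_f G \<kappa> x *\<^sub>v u) $ i" using jac_mv[OF i u, of \<kappa> x] unfolding J_def by simp
      finally show "(stoich_mat G *\<^sub>v c) $ i = (jac_f G \<kappa> x *\<^sub>v u) $ i" .
    qed
    then have "jac_f G \<kappa> x *\<^sub>v u = stoich_mat G *\<^sub>v c" by simp
    then show ?thesis using cc unfolding stoich_subspace_def by blast
  qed
  have wS: "w 0 * s$0 + w 1 * s$1 + w 2 * s$2 = 0" if sS: "s \<in> stoich_subspace G" for s
  proof -
    obtain c where c: "c \<in> carrier_vec m" "s = stoich_mat G *\<^sub>v c"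
      using sS unfolding stoich_subspace_def by blast
    have "w 0 * s$0 + w 1 * s$1 + w 2 * s$2 =
       (\<Sum>j<m. c $ j * (w 0 * real_of_int (N 0 j) + w 1 * real_of_int (N 1 j) + w 2 * real_of_int (N 2 j)))"
      using stoich_mv[of _ c] c by (simp add: sum_distrib_left sum.distrib algebra_simps)
    also have "\<dots> = 0" using wp by simp
    finally show ?thesis .
  qed
  have wJ: "w 0 * J 0 k + w 1 * J 1 k + w 2 * J 2 k = 0" if k: "k < 3" for k
  proof -
    have "w 0 * J 0 k + w 1 * J 1 k + w 2 * J 2 k =
       (\<Sum>j<m. T j k * (w 0 * real_of_int (N 0 j) + w 1 * real_of_int (N 1 j) + w 2 * real_of_int (N 2 j)))"
      using Jeq k by (simp add: sum_distrib_left sum.distrib algebra_simps)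
    also have "\<dots> = 0" using wp by simp
    finally show ?thesis .
  qed
  have solve: "\<exists>u\<in>carrier_vec 3. w 0 * u$0 + w 1 * u$1 + w 2 * u$2 = 0 \<and> jac_f G \<kappa> x *\<^sub>v u = s"
    if s: "s \<in> carrier_vec 3" "w 0 * s$0 + w 1 * s$1 + w 2 * s$2 = 0" for s
  proof -
    obtain u0 u1 u2 where u: "w 0*u0+w 1*u1+w 2*u2 = 0" "J 0 0*u0+J 0 1*u1+J 0 2*u2 = s$0"
      "J 1 0*u0+J 1 1*u1+J 1 2*u2 = s$1" "J 2 0*u0+J 2 1*u1+J 2 2*u2 = s$2"
      using lemL_scalar[of "w 0" "J 0 0" "w 1" "J 1 0" "w 2" "J 2 0" "J 0 1" "J 1 1" "J 2 1"
          "J 0 2" "J 1 2" "J 2 2" "s$0" "s$1" "s$2"] wJ[of 0] wJ[of 1] wJ[of 2] wnz e2 s(2)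
      unfolding J_def by auto
    define u where "u = vec 3 (\<lambda>k. if k = 0 then u0 else if k = 1 then u1 else u2)"
    have uc: "u \<in> carrier_vec 3" unfolding u_def by simp
    have "jac_f G \<kappa> x *\<^sub>v u = s"
    proof (rule eq_vecI)
      show "dim_vec (jac_f G \<kappa> x *\<^sub>v u) = dim_vec s" using jcar[OF uc] s by (metis carrier_vecD)
      fix i assume "i < dim_vec s"
      then have "i < 3" using s by simp
      then have "i = 0 \<or> i = 1 \<or> i = 2" by auto
      moreover have uv: "u$0 = u0" "u$1 = u1" "u$2 = u2" unfolding u_def by simp_all
      moreover have "(jac_f G \<kappa> x *\<^sub>v u) $ 0 = s $ 0" using jv[of 0 u] uc uv u(2) by simp
      moreover have "(jac_f G \<kappa> x *\<^sub>v u) $ 1 = s $ 1" using jv[of 1 u] uc uv u(3) by simp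
      moreover have "(jac_f G \<kappa> x *\<^sub>v u) $ 2 = s $ 2" using jv[of 2 u] uc uv u(4) by simp
      ultimately show "(jac_f G \<kappa> x *\<^sub>v u) $ i = s $ i" by auto
    qed
    moreover have "w 0 * u$0 + w 1 * u$1 + w 2 * u$2 = 0" using u(1) unfolding u_def by simp
    ultimately show ?thesis using uc by blast
  qed
  have "(\<lambda>u. jac_f G \<kappa> x *\<^sub>v u) ` stoich_subspace G = stoich_subspace G"
  proof
    show "(\<lambda>u. jac_f G \<kappa> x *\<^sub>v u) ` stoich_subspace G \<subseteq> stoich_subspace G"
      using inS Scar by auto
    show "stoich_subspace G \<subseteq> (\<lambda>u. jac_f G \<kappa> x *\<^sub>v u) ` stoich_subspace G"
    proof
      fix s assume sS: "s \<in> stoich_subspace G"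
      obtain u where u: "u \<in> carrier_vec 3" "w 0 * u$0 + w 1 * u$1 + w 2 * u$2 = 0" "jac_f G \<kappa> x *\<^sub>v u = s"
        using solve[OF Scar[OF sS] wS[OF sS]] by blast
      obtain u' where u': "u' \<in> carrier_vec 3" "jac_f G \<kappa> x *\<^sub>v u' = u"
        using solve[OF u(1) u(2)] by blast
      have "u \<in> stoich_subspace G" using inS[OF u'(1)] u'(2) by simp
      then show "s \<in> (\<lambda>u. jac_f G \<kappa> x *\<^sub>v u) ` stoich_subspace G" using u(3) by blast
    qed
  qed
  then show ?thesis unfolding degenerate_ss_def by simp
qed

definition cc :: "(nat \<Rightarrow> real) \<Rightarrow> nat \<Rightarrow> nat \<Rightarrow> real" where
  "cc lam p q = A lam p p * A lam q q - A lam p q * A lam q p"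

lemma e2_zero:
  fixes lam :: "nat \<Rightarrow> real" and a b c :: real
  assumes lp: "\<forall>j<m. lam j > 0"
    and ker: "\<forall>i<(3::nat). (\<Sum>j<m. real_of_int (N i j) * lam j) = 0"
    and deg: "\<forall>\<kappa> x. pos_steady_state G \<kappa> x \<longrightarrow> degenerate_ss G \<kappa> x"
    and wnz: "w 0 \<noteq> 0 \<or> w 1 \<noteq> 0 \<or> w (2::nat) \<noteq> (0::real)"
    and wp: "\<forall>j<m. w 0 * real_of_int (N 0 j) + w 1 * real_of_int (N 1 j) + w 2 * real_of_int (N 2 j) = 0"
    and abc: "a > 0" "b > 0" "c > 0"
  shows "a * b * cc lam 0 1 + a * c * cc lam 0 2 + b * c * cc lam 1 2 = 0"
proof -
  define z :: "nat \<Rightarrow> real" where "z = (\<lambda>k. if k = 0 then a else if k = 1 then b else c)"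
  define x :: "nat \<Rightarrow> real" where "x = (\<lambda>k. 1 / z k)"
  define \<kappa> :: "nat \<Rightarrow> real" where "\<kappa> = (\<lambda>j. lam j / (\<Prod>l<3. x l ^ mu j l))"
  have zp: "\<forall>k<3. z k > 0" using abc unfolding z_def by simp
  have ps: "pos_steady_state G \<kappa> x" and jac: "\<forall>i<3. \<forall>k<3. jac_f G \<kappa> x $$ (i,k) = A lam i k * z k"
    using constr[OF lp zp ker x_def \<kappa>_def] by auto
  have "degenerate_ss G \<kappa> x" using deg ps by blast
  then have "\<not> ((jac_f G \<kappa> x $$ (0,0) * jac_f G \<kappa> x $$ (1,1) - jac_f G \<kappa> x $$ (0,1) * jac_f G \<kappa> x $$ (1,0))
           + (jac_f G \<kappa> x $$ (0,0) * jac_f G \<kappa> x $$ (2,2) - jac_f G \<kappa> x $$ (0,2) * jac_f G \<kappa> x $$ (2,0))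
           + (jac_f G \<kappa> x $$ (1,1) * jac_f G \<kappa> x $$ (2,2) - jac_f G \<kappa> x $$ (1,2) * jac_f G \<kappa> x $$ (2,1)) \<noteq> 0)"
    using nondeg[OF wnz wp] by blast
  then have "(A lam 0 0 * a * (A lam 1 1 * b) - A lam 0 1 * b * (A lam 1 0 * a))
           + (A lam 0 0 * a * (A lam 2 2 * c) - A lam 0 2 * c * (A lam 2 0 * a))
           + (A lam 1 1 * b * (A lam 2 2 * c) - A lam 1 2 * c * (A lam 2 1 * b)) = 0"
    using jac unfolding z_def by simp
  then show ?thesis unfolding cc_def by (simp add: algebra_simps)
qed

lemma cc_zero:
  fixes lam :: "nat \<Rightarrow> real"
  assumes lp: "\<forall>j<m. lam j > 0"
    and ker: "\<forall>i<(3::nat). (\<Sum>j<m. real_of_int (N i j) * lam j) = 0"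
    and deg: "\<forall>\<kappa> x. pos_steady_state G \<kappa> x \<longrightarrow> degenerate_ss G \<kappa> x"
    and wnz: "w 0 \<noteq> 0 \<or> w 1 \<noteq> 0 \<or> w (2::nat) \<noteq> (0::real)"
    and wp: "\<forall>j<m. w 0 * real_of_int (N 0 j) + w 1 * real_of_int (N 1 j) + w 2 * real_of_int (N 2 j) = 0"
  shows "cc lam 0 1 = 0 \<and> cc lam 0 2 = 0 \<and> cc lam 1 2 = 0"
proof -
  note e = e2_zero[OF lp ker deg wnz wp]
  have "cc lam 0 1 + cc lam 0 2 + cc lam 1 2 = 0" using e[of 1 1 1] by simp
  moreover have "2 * cc lam 0 1 + 2 * cc lam 0 2 + cc lam 1 2 = 0" using e[of 2 1 1] by simp
  moreover have "2 * cc lam 0 1 + cc lam 0 2 + 2 * cc lam 1 2 = 0" using e[of 1 2 1] by simp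
  ultimately show ?thesis by linarith
qed

lemma signs:
  fixes lam :: "nat \<Rightarrow> real"
  assumes lp: "\<forall>j<m. lam j > 0"
    and ker: "\<forall>i<(3::nat). (\<Sum>j<m. real_of_int (N i j) * lam j) = 0"
    and p: "p < 3" "\<not> redundant G p"
  shows "(\<exists>j<m. N p j = 1) \<and> (\<exists>j<m. N p j = -1)"
proof -
  obtain j0 where j0: "j0 < m" "N p j0 \<noteq> 0" using nonred_N[OF p] by blast
  have kp: "(\<Sum>j<m. real_of_int (N p j) * lam j) = 0" using ker p by simp
  show ?thesis
  proof (rule ccontr)
    assume "\<not> ?thesis"
    then have "(\<forall>j<m. N p j \<noteq> 1) \<or> (\<forall>j<m. N p j \<noteq> -1)" by blast
    then show False
    proof
      assume h: "\<forall>j<m. N p j \<noteq> 1"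
      then have "\<forall>j<m. N p j \<le> 0" using N_cases p by fastforce
      then have nz: "N p j0 < 0" using j0 by force
      have "(\<Sum>j<m. - real_of_int (N p j) * lam j) > 0"
      proof (rule sum_pos2[of "{..<m}" j0])
        show "j0 \<in> {..<m}" using j0 by simp
        have "real_of_int (N p j0) < 0" using nz by simp
        then show "0 < - real_of_int (N p j0) * lam j0" using lp j0 by (simp add: mult_neg_pos)
        show "0 \<le> - real_of_int (N p j) * lam j" if "j \<in> {..<m}" for j
          using \<open>\<forall>j<m. N p j \<le> 0\<close> lp that by (simp add: mult_nonpos_nonneg less_imp_le)
      qed simp
      then show False using kp by (simp add: sum_negf)
    next
      assume h: "\<forall>j<m. N p j \<noteq> -1"
      then have "\<forall>j<m. N p j \<ge> 0" using N_cases p by fastforce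
      then have nz: "N p j0 > 0" using j0 by force
      have "(\<Sum>j<m. real_of_int (N p j) * lam j) > 0"
      proof (rule sum_pos2[of "{..<m}" j0])
        show "j0 \<in> {..<m}" using j0 by simp
        show "0 < real_of_int (N p j0) * lam j0" using nz lp j0 by simp
        show "0 \<le> real_of_int (N p j) * lam j" if "j \<in> {..<m}" for j
          using \<open>\<forall>j<m. N p j \<ge> 0\<close> lp that by (simp add: less_imp_le)
      qed simp
      then show False using kp by simp
    qed
  qed
qed

definition dD :: "(nat \<Rightarrow> real) \<Rightarrow> nat \<Rightarrow> real" where
  "dD lam p = (\<Sum>j<m. if N p j = -1 then lam j else 0)"
definition dP :: "(nat \<Rightarrow> real) \<Rightarrow> nat \<Rightarrow> real" where
  "dP lam p = (\<Sum>j<m. if N p j = 1 then lam j else 0)"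
definition aP :: "(nat \<Rightarrow> real) \<Rightarrow> nat \<Rightarrow> nat \<Rightarrow> real" where
  "aP lam p q = (\<Sum>j<m. if N p j = 1 then lam j * real (mu j q) else 0)"
definition aD :: "(nat \<Rightarrow> real) \<Rightarrow> nat \<Rightarrow> nat \<Rightarrow> real" where
  "aD lam p q = (\<Sum>j<m. if N p j = -1 then lam j * real (mu j q) else 0)"

lemma ker_split: assumes "p < 3"
  shows "(\<Sum>j<m. real_of_int (N p j) * lam j) = dP lam p - dD lam p"
proof -
  have "(\<Sum>j<m. real_of_int (N p j) * lam j) = (\<Sum>j<m. (if N p j = 1 then lam j else 0) - (if N p j = -1 then lam j else 0))"
  proof (rule sum.cong[OF refl])
    fix j assume "j \<in> {..<m}"
    then show "real_of_int (N p j) * lam j = (if N p j = 1 then lam j else 0) - (if N p j = -1 then lam j else 0)"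
      using N_cases[of j p] assms by auto
  qed
  then show ?thesis unfolding dP_def dD_def by (simp add: sum_subtractf)
qed

lemma App: assumes "p < 3" shows "A lam p p = - dD lam p"
proof -
  have "A lam p p = (\<Sum>j<m. - (if N p j = -1 then lam j else 0))"
    unfolding A_def
  proof (rule sum.cong[OF refl])
    fix j assume "j \<in> {..<m}"
    then show "lam j * real_of_int (N p j) * real (mu j p) = - (if N p j = -1 then lam j else 0)"
      using N_cases[of j p] assms by auto
  qed
  then show ?thesis unfolding dD_def by (simp add: sum_negf)
qed

lemma Apq: assumes "p < 3" shows "A lam p q = aP lam p q - aD lam p q"
proof -
  have "A lam p q = (\<Sum>j<m. (if N p j = 1 then lam j * real (mu j q) else 0) - (if N p j = -1 then lam j * real (mu j q) else 0))"
    unfolding A_def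
  proof (rule sum.cong[OF refl])
    fix j assume "j \<in> {..<m}"
    then show "lam j * real_of_int (N p j) * real (mu j q) = (if N p j = 1 then lam j * real (mu j q) else 0) - (if N p j = -1 then lam j * real (mu j q) else 0)"
      using N_cases[of j p] assms by auto
  qed
  then show ?thesis unfolding aP_def aD_def by (simp add: sum_subtractf)
qed

lemma a_bounds:
  fixes lam :: "nat \<Rightarrow> real"
  assumes lp: "\<forall>j<m. lam j > 0" and q: "q < 3"
  shows "0 \<le> aP lam p q" "aP lam p q \<le> dP lam p" "0 \<le> aD lam p q" "aD lam p q \<le> dD lam p"
proof -
  have t: "0 \<le> lam j * real (mu j q) \<and> lam j * real (mu j q) \<le> lam j" if "j < m" for j
  proof -
    have r: "real (mu j q) \<le> 1" using mu_le1[OF that q] by simp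
    have l: "lam j > 0" using lp that by simp
    have "0 \<le> lam j * real (mu j q)" using l by simp
    moreover have "lam j * real (mu j q) \<le> lam j" using l r by (simp add: mult_left_le)
    ultimately show ?thesis by simp
  qed
  show "0 \<le> aP lam p q" unfolding aP_def using t by (intro sum_nonneg) auto
  show "0 \<le> aD lam p q" unfolding aD_def using t by (intro sum_nonneg) auto
  show "aP lam p q \<le> dP lam p" unfolding aP_def dP_def using t by (intro sum_mono) auto
  show "aD lam p q \<le> dD lam p" unfolding aD_def dD_def using t by (intro sum_mono) auto
qed

lemma dD_pos:
  fixes lam :: "nat \<Rightarrow> real"
  assumes lp: "\<forall>j<m. lam j > 0"
    and ker: "\<forall>i<(3::nat). (\<Sum>j<m. real_of_int (N i j) * lam j) = 0"
    and p: "p < 3" "\<not> redundant G p"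
  shows "dD lam p > 0"
proof -
  obtain j0 where j0: "j0 < m" "N p j0 = -1" using signs[OF lp ker p] by blast
  show ?thesis unfolding dD_def
  proof (rule sum_pos2[of "{..<m}" j0])
    show "j0 \<in> {..<m}" using j0 by simp
    show "0 < (if N p j0 = -1 then lam j0 else 0)" using j0 lp by simp
    show "0 \<le> (if N p j = -1 then lam j else 0)" if "j \<in> {..<m}" for j
      using lp that by (simp add: less_imp_le)
  qed simp
qed

lemma sum_if_zero:
  fixes f :: "nat \<Rightarrow> real"
  assumes "(\<Sum>j<m. if P j then f j else 0) = 0" "\<forall>j<m. P j \<longrightarrow> f j \<ge> 0"
  shows "\<forall>j<m. P j \<longrightarrow> f j = 0"
proof -
  have "\<forall>j\<in>{..<m}. (if P j then f j else 0) = 0"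
    using sum_nonneg_eq_0_iff[of "{..<m}" "\<lambda>j. if P j then f j else 0"] assms by auto
  then show ?thesis by (metis lessThan_iff)
qed

lemma struct:
  fixes lam :: "nat \<Rightarrow> real"
  assumes lp: "\<forall>j<m. lam j > 0"
    and ker: "\<forall>i<(3::nat). (\<Sum>j<m. real_of_int (N i j) * lam j) = 0"
    and p: "p < 3" "\<not> redundant G p" and q: "q < 3" "\<not> redundant G q" and c: "cc lam p q = 0"
  shows "\<exists>b1 b2. \<forall>j<m. (N p j = 1 \<longrightarrow> mu j q = b1) \<and> (N p j = -1 \<longrightarrow> mu j q = b2)"
proof -
  have dp: "dD lam p > 0" using dD_pos[OF lp ker p] .
  have dq: "dD lam q > 0" using dD_pos[OF lp ker q] .
  have ePD: "dP lam p = dD lam p" using ker_split[OF p(1), of lam] ker p by simp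
  have eQD: "dP lam q = dD lam q" using ker_split[OF q(1), of lam] ker q by simp
  note bp = a_bounds[OF lp q(1), of p]
  note bq = a_bounds[OF lp p(1), of q]
  have Apq': "A lam p q = aP lam p q - aD lam p q" by (rule Apq[OF p(1)])
  have Aqp': "A lam q p = aP lam q p - aD lam q p" by (rule Apq[OF q(1)])
  have abs1: "\<bar>A lam p q\<bar> \<le> dD lam p" using Apq' bp ePD by linarith
  have abs2: "\<bar>A lam q p\<bar> \<le> dD lam q" using Aqp' bq eQD by linarith
  have prod: "A lam p q * A lam q p = dD lam p * dD lam q"
    using c App[OF p(1), of lam] App[OF q(1), of lam] unfolding cc_def by simp
  have eq: "\<bar>A lam p q\<bar> = dD lam p"
  proof (rule ccontr)
    assume "\<bar>A lam p q\<bar> \<noteq> dD lam p"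
    then have lt: "\<bar>A lam p q\<bar> < dD lam p" using abs1 by simp
    have "\<bar>A lam p q\<bar> * \<bar>A lam q p\<bar> \<le> \<bar>A lam p q\<bar> * dD lam q"
      using abs2 by (simp add: mult_left_mono)
    also have "\<dots> < dD lam p * dD lam q" using lt dq by (simp add: mult_strict_right_mono)
    finally have "\<bar>A lam p q * A lam q p\<bar> < dD lam p * dD lam q" by (simp add: abs_mult)
    then show False using prod dp dq by simp
  qed
  have tP: "\<forall>j<m. N p j = 1 \<longrightarrow> lam j * real (mu j q) \<ge> 0" and tD: "\<forall>j<m. N p j = -1 \<longrightarrow> lam j * real (mu j q) \<ge> 0"
    using lp by (auto simp: less_imp_le)
  have tP': "\<forall>j<m. N p j = 1 \<longrightarrow> lam j - lam j * real (mu j q) \<ge> 0"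
  proof (intro allI impI)
    fix j assume "j < m" "N p j = 1"
    then have "real (mu j q) \<le> 1" using mu_le1 q by simp
    then show "lam j - lam j * real (mu j q) \<ge> 0" using lp \<open>j < m\<close> by (simp add: mult_left_le)
  qed
  have tD': "\<forall>j<m. N p j = -1 \<longrightarrow> lam j - lam j * real (mu j q) \<ge> 0"
  proof (intro allI impI)
    fix j assume "j < m" "N p j = -1"
    then have "real (mu j q) \<le> 1" using mu_le1 q by simp
    then show "lam j - lam j * real (mu j q) \<ge> 0" using lp \<open>j < m\<close> by (simp add: mult_left_le)
  qed
  have dPa: "dP lam p - aP lam p q = (\<Sum>j<m. if N p j = 1 then lam j - lam j * real (mu j q) else 0)"
    unfolding dP_def aP_def by (simp add: sum_subtractf[symmetric] if_distrib) (rule sum.cong, auto)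
  have dDa: "dD lam p - aD lam p q = (\<Sum>j<m. if N p j = -1 then lam j - lam j * real (mu j q) else 0)"
    unfolding dD_def aD_def by (simp add: sum_subtractf[symmetric] if_distrib) (rule sum.cong, auto)
  have m01: "mu j q = 0 \<or> mu j q = 1" if "j < m" for j using mu_le1[OF that q(1)] by auto
  from eq have "A lam p q = dD lam p \<or> A lam p q = - dD lam p" by linarith
  then show ?thesis
  proof
    assume h: "A lam p q = dD lam p"
    then have z1: "dP lam p - aP lam p q = 0" and z2: "aD lam p q = 0" using Apq' bp ePD by linarith+
    have r1: "\<forall>j<m. N p j = 1 \<longrightarrow> lam j - lam j * real (mu j q) = 0"
      using sum_if_zero[OF z1[unfolded dPa] tP'] .
    have r2: "\<forall>j<m. N p j = -1 \<longrightarrow> lam j * real (mu j q) = 0"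
      using sum_if_zero[OF z2[unfolded aD_def] tD] .
    show ?thesis
    proof (intro exI allI impI conjI)
      fix j assume j: "j < m"
      show "mu j q = 1" if "N p j = 1" using r1 j that lp m01[OF j] by force
      show "mu j q = 0" if "N p j = -1" using r2 j that lp m01[OF j] by force
    qed
  next
    assume h: "A lam p q = - dD lam p"
    then have z1: "aP lam p q = 0" and z2: "dD lam p - aD lam p q = 0" using Apq' bp ePD by linarith+
    have r1: "\<forall>j<m. N p j = 1 \<longrightarrow> lam j * real (mu j q) = 0"
      using sum_if_zero[OF z1[unfolded aP_def] tP] .
    have r2: "\<forall>j<m. N p j = -1 \<longrightarrow> lam j - lam j * real (mu j q) = 0"
      using sum_if_zero[OF z2[unfolded dDa] tD'] .
    show ?thesis
    proof (intro exI allI impI conjI)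
      fix j assume j: "j < m"
      show "mu j q = 0" if "N p j = 1" using r1 j that lp m01[OF j] by force
      show "mu j q = 1" if "N p j = -1" using r2 j that lp m01[OF j] by force
    qed
  qed
qed

lemma final:
  fixes lam :: "nat \<Rightarrow> real"
  assumes lp: "\<forall>j<m. lam j > 0"
    and ker: "\<forall>i<(3::nat). (\<Sum>j<m. real_of_int (N i j) * lam j) = 0"
    and const: "\<forall>p q. p < 3 \<longrightarrow> q < 3 \<longrightarrow> p \<noteq> q \<longrightarrow> \<not> redundant G p \<longrightarrow> \<not> redundant G q \<longrightarrow>
        (\<exists>b1 b2. \<forall>j<m. (N p j = 1 \<longrightarrow> mu j q = b1) \<and> (N p j = -1 \<longrightarrow> mu j q = b2))"
    and i: "i < nsp (remove_redundant G)"
  shows "card (Poly_Mapping.keys (f_poly (remove_redundant G) i)) = 2"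
proof -
  define ks where "ks = filter (\<lambda>i. \<not> redundant G i) [0..<nsp G]"
  define re where "re = (\<lambda>(a::cplx) k. if k < length ks then a (ks ! k) else 0)"
  have G'eq: "remove_redundant G = (length ks, map (\<lambda>(a,b). (re a, re b)) (rxns G))"
    unfolding remove_redundant_def ks_def re_def Let_def by simp
  define G' where "G' = remove_redundant G"
  have nG': "nsp G' = length ks" unfolding G'_def G'eq nsp_def by simp
  have rG': "rxns G' = map (\<lambda>(a,b). (re a, re b)) (rxns G)" unfolding G'_def G'eq rxns_def by simp
  have lenG': "length (rxns G') = m" using rG' by simp
  have nthG': "rxns G' ! j = (re (mu j), re (nu j))" if "j < m" for j using rG' that by (simp add: case_prod_beta)
  have ilt: "i < length ks" using i nG' unfolding G'_def by simp
  define p where "p = ks ! i"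
  have ksset: "set ks = {i. i < 3 \<and> \<not> redundant G i}" unfolding ks_def using n3 by auto
  have ksmem: "ks ! l < 3 \<and> \<not> redundant G (ks ! l)" if "l < length ks" for l
    using nth_mem[OF that] ksset by auto
  have pp: "p < 3" "\<not> redundant G p" using ksmem[OF ilt] p_def by auto
  have stG': "stoich_int G' i j = N p j" if "j < m" for j
    using nthG'[OF that] ilt unfolding stoich_int_def p_def re_def by simp
  have keys: "Poly_Mapping.keys (f_poly G' i) = (\<lambda>j. expo G' (re (mu j))) ` {j. j < m \<and> N p j \<noteq> 0}"
    unfolding keys_f_poly lenG' by (intro image_cong) (auto simp: nthG' stG')
  have elook: "Poly_Mapping.lookup (expo G' (re a)) l = (if l < length ks then a (ks ! l) else 0)" for a l
    by (simp add: expo_lookup nG' re_def)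
  have eeq: "expo G' (re a) = expo G' (re b)" if "\<forall>l<length ks. a (ks!l) = b (ks!l)" for a b
    by (rule poly_mapping_eqI) (simp add: elook that)
  obtain j1 where j1: "j1 < m" "N p j1 = 1" using signs[OF lp ker pp] by blast
  obtain j2 where j2: "j2 < m" "N p j2 = -1" using signs[OF lp ker pp] by blast
  have Es: "expo G' (re (mu j)) = expo G' (re (mu j'))"
    if "j < m" "j' < m" "N p j = N p j'" "N p j \<noteq> 0" for j j'
  proof (rule eeq, intro allI impI)
    fix l assume l: "l < length ks"
    show "mu j (ks!l) = mu j' (ks!l)"
    proof (cases "ks ! l = p")
      case True then show ?thesis using N_cases[of j p] N_cases[of j' p] that pp by auto
    next
      case False
      obtain b1 b2 where "\<forall>j<m. (N p j = 1 \<longrightarrow> mu j (ks!l) = b1) \<and> (N p j = -1 \<longrightarrow> mu j (ks!l) = b2)"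
        using const pp ksmem[OF l] False by metis
      then show ?thesis using that N_cases[of j p] pp by auto
    qed
  qed
  have keys2: "Poly_Mapping.keys (f_poly G' i) = {expo G' (re (mu j1)), expo G' (re (mu j2))}"
  proof
    show "Poly_Mapping.keys (f_poly G' i) \<subseteq> {expo G' (re (mu j1)), expo G' (re (mu j2))}"
    proof
      fix e assume "e \<in> Poly_Mapping.keys (f_poly G' i)"
      then obtain j where j: "j < m" "N p j \<noteq> 0" "e = expo G' (re (mu j))" unfolding keys by blast
      then have "N p j = 1 \<or> N p j = -1" using N_cases[of j p] pp by auto
      then show "e \<in> {expo G' (re (mu j1)), expo G' (re (mu j2))}"
        using Es[of j j1] Es[of j j2] j j1 j2 by auto
    qed
    show "{expo G' (re (mu j1)), expo G' (re (mu j2))} \<subseteq> Poly_Mapping.keys (f_poly G' i)"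
      unfolding keys using j1 j2 by auto
  qed
  have "Poly_Mapping.lookup (expo G' (re (mu j1))) i \<noteq> Poly_Mapping.lookup (expo G' (re (mu j2))) i"
    using elook ilt N_cases[of j1 p] N_cases[of j2 p] j1 j2 pp unfolding p_def by auto
  then have ne: "expo G' (re (mu j1)) \<noteq> expo G' (re (mu j2))" by metis
  show ?thesis unfolding G'_def[symmetric] keys2 using ne by simp
qed

lemma no_red_eq: assumes "\<forall>r<3. \<not> redundant G r" shows "remove_redundant G = G"
proof -
  have ks: "filter (\<lambda>i. \<not> redundant G i) [0..<nsp G] = [0..<3]" using assms n3 by (simp add: filter_True)
  have wf0: "\<forall>r\<in>set (rxns G). \<forall>i\<ge>3. fst r i = 0 \<and> snd r i = 0" using wf n3 unfolding wf_rnet_def by auto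
  have mp: "map (\<lambda>(a,b). ((\<lambda>k. if k < length [0..<3] then a ([0..<3] ! k) else 0)::cplx,
                         (\<lambda>k. if k < length [0..<3] then b ([0..<3] ! k) else 0)::cplx)) (rxns G) = rxns G"
  proof (rule map_idI)
    fix r assume r: "r \<in> set (rxns G)"
    obtain a b where ab: "r = (a,b)" by fastforce
    have "(\<lambda>k. if k < length [0..<3] then a ([0..<3] ! k) else 0) = a"
      using wf0 r ab by (auto simp: fun_eq_iff)
    moreover have "(\<lambda>k. if k < length [0..<3] then b ([0..<3] ! k) else 0) = b"
      using wf0 r ab by (auto simp: fun_eq_iff)
    ultimately show "(\<lambda>(a,b). ((\<lambda>k. if k < length [0..<3] then a ([0..<3] ! k) else 0)::cplx,
                         (\<lambda>k. if k < length [0..<3] then b ([0..<3] ! k) else 0)::cplx)) r = r"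
      using ab by simp
  qed
  have "remove_redundant G = (3, rxns G)"
    unfolding remove_redundant_def Let_def ks using mp by simp
  also have "\<dots> = G" using n3 unfolding nsp_def rxns_def by (metis prod.collapse)
  finally show ?thesis .
qed

lemma w_from_W:
  assumes cl: "cons_law_matrix G W" and rk: "rank_rnet G = 2"
  shows "\<exists>w. (w 0 \<noteq> 0 \<or> w 1 \<noteq> 0 \<or> w (2::nat) \<noteq> (0::real)) \<and>
     (\<forall>j<m. w 0 * real_of_int (N 0 j) + w 1 * real_of_int (N 1 j) + w 2 * real_of_int (N 2 j) = 0)"
proof -
  have W: "W \<in> carrier_mat 1 3"
    and rowS: "\<forall>k<1. row W k \<in> {w \<in> carrier_vec 3. \<forall>v\<in>stoich_subspace G. w \<bullet> v = 0}"
    and inj: "\<forall>c\<in>carrier_vec 1. transpose_mat W *\<^sub>v c = 0\<^sub>v 3 \<longrightarrow> c = 0\<^sub>v 1"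
    using cl rk n3 unfolding cons_law_matrix_def Let_def by auto
  define w where "w i = W $$ (0,i)" for i
  have r0: "\<forall>v\<in>stoich_subspace G. row W 0 \<bullet> v = 0" using rowS by auto
  have wp: "w 0 * real_of_int (N 0 j) + w 1 * real_of_int (N 1 j) + w 2 * real_of_int (N 2 j) = 0"
    if j: "j < m" for j
  proof -
    define v where "v = stoich_mat G *\<^sub>v unit_vec m j"
    have vS: "v \<in> stoich_subspace G" unfolding v_def stoich_subspace_def by auto
    have vc: "v \<in> carrier_vec 3" unfolding v_def using stoich_carrier by auto
    have vi: "v $ i = real_of_int (N i j)" if "i < 3" for i
    proof -
      have "v $ i = (\<Sum>j'<m. real_of_int (N i j') * unit_vec m j $ j')"
        unfolding v_def using stoich_mv[OF that, of "unit_vec m j"] by simp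
      also have "\<dots> = (\<Sum>j'<m. if j' = j then real_of_int (N i j) else 0)"
        by (rule sum.cong[OF refl]) (auto simp: unit_vec_def)
      also have "\<dots> = real_of_int (N i j)" using j by simp
      finally show ?thesis .
    qed
    have "row W 0 \<bullet> v = (\<Sum>i<3. row W 0 $ i * v $ i)"
      using vc by (simp add: scalar_prod_def atLeast0LessThan)
    also have "\<dots> = (\<Sum>i<3. w i * real_of_int (N i j))"
      by (rule sum.cong[OF refl]) (use W vi in \<open>auto simp: w_def\<close>)
    also have "\<dots> = w 0 * real_of_int (N 0 j) + w 1 * real_of_int (N 1 j) + w 2 * real_of_int (N 2 j)"
      by (rule sum3)
    finally show ?thesis using r0 vS by simp
  qed
  have wnz: "w 0 \<noteq> 0 \<or> w 1 \<noteq> 0 \<or> w 2 \<noteq> 0"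
  proof (rule ccontr)
    assume h: "\<not> ?thesis"
    define c :: "real vec" where "c = vec 1 (\<lambda>_. 1)"
    have cc1: "c \<in> carrier_vec 1" unfolding c_def by simp
    have "transpose_mat W *\<^sub>v c = 0\<^sub>v 3"
    proof (rule eq_vecI)
      show "dim_vec (transpose_mat W *\<^sub>v c) = dim_vec (0\<^sub>v 3 :: real vec)" using W by simp
      fix i assume "i < dim_vec (0\<^sub>v 3 :: real vec)"
      then have i: "i < 3" by simp
      have "(transpose_mat W *\<^sub>v c) $ i = (\<Sum>k\<in>{0..<1}. W $$ (k, i) * c $ k)"
        using W i cc1 by (simp add: scalar_prod_def)
      also have "\<dots> = w i" unfolding c_def w_def by simp
      also have "\<dots> = 0"
      proof -
        have "i = 0 \<or> i = 1 \<or> i = 2" using i by auto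
        then show ?thesis using h by auto
      qed
      finally show "(transpose_mat W *\<^sub>v c) $ i = 0\<^sub>v 3 $ i" using i by simp
    qed
    then have "c = 0\<^sub>v 1" using inj cc1 by blast
    moreover have "c $ 0 = 1" unfolding c_def by simp
    ultimately show False by simp
  qed
  show ?thesis using wnz wp by blast
qed

end

theorem theorem2:
  fixes G :: rnet
  assumes "wf_rnet G" and "zero_one G" and "nsp G = 3" and "rank_rnet G = 2"
    and "degenerate_rnet G"
  shows "\<forall>W. cons_law_matrix (remove_redundant G) W \<longrightarrow>
           (\<forall>i < nsp (remove_redundant G). i \<notin> lead_indices W \<longrightarrow>
              card (Poly_Mapping.keys (f_poly (remove_redundant G) i)) = 2)"
proof -
  interpret net3 G using assms(1-3) by unfold_locales
  from assms(5) obtain \<kappa>0 x0 where ps: "pos_steady_state G \<kappa>0 x0"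
    and deg: "\<forall>\<kappa> x. pos_steady_state G \<kappa> x \<longrightarrow> degenerate_ss G \<kappa> x"
    unfolding degenerate_rnet_def by blast
  define lam where "lam j = rate G \<kappa>0 x0 j" for j
  have lp: "\<forall>j<m. lam j > 0"
  proof (intro allI impI)
    fix j assume j: "j < m"
    have "\<kappa>0 j > 0" using ps j unfolding pos_steady_state_def by blast
    moreover have "(\<Prod>l<nsp G. x0 l ^ mu j l) > 0"
      using ps unfolding pos_steady_state_def by (intro prod_pos) auto
    ultimately show "lam j > 0" unfolding lam_def rate_def by simp
  qed
  have ker: "\<forall>i<(3::nat). (\<Sum>j<m. real_of_int (N i j) * lam j) = 0"
  proof (intro allI impI)
    fix i :: nat assume i: "i < 3"
    have "ma_f G \<kappa>0 x0 $ i = 0" using ps i assms(3) unfolding pos_steady_state_def by simp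
    then show "(\<Sum>j<m. real_of_int (N i j) * lam j) = 0"
      using ma_f_idx[of i G \<kappa>0 x0] i assms(3) unfolding lam_def by simp
  qed
  show ?thesis
  proof (intro allI impI)
    fix W i assume cl: "cons_law_matrix (remove_redundant G) W"
      and ilt: "i < nsp (remove_redundant G)" and nl: "i \<notin> lead_indices W"
    obtain w where wnz: "w 0 \<noteq> 0 \<or> w 1 \<noteq> 0 \<or> w (2::nat) \<noteq> (0::real)"
      and wp: "\<forall>j<m. w 0 * real_of_int (N 0 j) + w 1 * real_of_int (N 1 j) + w 2 * real_of_int (N 2 j) = 0"
    proof (cases "\<exists>r<3. redundant G r")
      case True
      then obtain r where r: "r < 3" "redundant G r" by blast
      define w :: "nat \<Rightarrow> real" where "w = (\<lambda>k. if k = r then 1 else 0)"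
      have "r = 0 \<or> r = 1 \<or> r = 2" using r by auto
      then have "w 0 \<noteq> 0 \<or> w 1 \<noteq> 0 \<or> w 2 \<noteq> 0" unfolding w_def by auto
      moreover have "\<forall>j<m. w 0 * real_of_int (N 0 j) + w 1 * real_of_int (N 1 j) + w 2 * real_of_int (N 2 j) = 0"
      proof (intro allI impI)
        fix j assume j: "j < m"
        have "N r j = 0" using red_N0[OF r(2) j] .
        then show "w 0 * real_of_int (N 0 j) + w 1 * real_of_int (N 1 j) + w 2 * real_of_int (N 2 j) = 0"
          using \<open>r = 0 \<or> r = 1 \<or> r = 2\<close> unfolding w_def by auto
      qed
      ultimately show ?thesis using that by blast
    next
      case False
      then have "remove_redundant G = G" using no_red_eq by blast
      then have "cons_law_matrix G W" using cl by simp
      then show ?thesis using w_from_W assms(4) that by blast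
    qed
    have cz: "cc lam 0 1 = 0 \<and> cc lam 0 2 = 0 \<and> cc lam 1 2 = 0"
      using cc_zero[OF lp ker deg wnz wp] .
    have ccsym: "cc lam q p = cc lam p q" for p q unfolding cc_def by (simp add: mult.commute)
    have const: "\<forall>p q. p < 3 \<longrightarrow> q < 3 \<longrightarrow> p \<noteq> q \<longrightarrow> \<not> redundant G p \<longrightarrow> \<not> redundant G q \<longrightarrow>
        (\<exists>b1 b2. \<forall>j<m. (N p j = 1 \<longrightarrow> mu j q = b1) \<and> (N p j = -1 \<longrightarrow> mu j q = b2))"
    proof (intro allI impI)
      fix p q :: nat assume pq: "p < 3" "q < 3" "p \<noteq> q" "\<not> redundant G p" "\<not> redundant G q"
      have "(p,q) \<in> {(0,1),(1,0),(0,2),(2,0),(1,2),(2,1)}" using pq(1-3) by auto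
      then have "cc lam p q = 0" using cz ccsym by auto
      then show "\<exists>b1 b2. \<forall>j<m. (N p j = 1 \<longrightarrow> mu j q = b1) \<and> (N p j = -1 \<longrightarrow> mu j q = b2)"
        using struct[OF lp ker pq(1) pq(4) pq(2) pq(5)] by blast
    qed
    show "card (Poly_Mapping.keys (f_poly (remove_redundant G) i)) = 2"
      using final[OF lp ker const ilt] .
  qed
qed


end
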